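(* Let $k\ge1$. The T-ideal of $F(\mathfrak B)$ generated by (the element corresponding to) $(y_1z_2-y_2z_1)^k$ contains $(y_1z_1)^k(y_1-z_1)^k$, and hence contains $(y_1z_1)^k(y_1-z_1)^k\,w^{(j)}_\mu$ for every partition $\mu=(\mu_1,\mu_2)$ and every admissible $j$.
   Context: $K$ is a field of characteristic $0$. $\mathfrak B$ is the variety of bicommutative algebras (identities $(x_1x_2)x_3=(x_1x_3)x_2$, $x_1(x_2x_3)=x_2(x_1x_3)$), with free algebra $F(\mathfrak B)$ on $x_1,x_2,\dots$; a T-ideal is a two-sided ideal closed under all endomorphisms. Model: with $K[Y,Z]$ the commutative polynomial ring in $y_1,y_2,\dots,z_1,z_2,\dots$, the algebra $G$ has basis $\{x_i\}\cup\{Y^\alpha Z^\beta:|\alpha|,|\beta|>0\}$ and multiplication $x_ix_j=y_iz_j$, $x_i\cdot(Y^\alpha Z^\beta)=y_iY^\alpha Z^\beta$, $(Y^\alpha Z^\beta)\cdot x_j=Y^\alpha Z^\beta z_j$, $(Y^\alpha Z^\beta)(Y^\gamma Z^\delta)=Y^{\alpha+\gamma}Z^{\beta+\delta}$; it is known that $x_i\mapsto x_i$ gives an isomorphism $F(\mathfrak B)\cong G$, so elements of $F(\mathfrak B)^2$ are polynomials in the $y_i,z_i$ of positive degree in both sets, and the product in $G$ of two such elements is their product as polynomials. The elements $w^{(j)}_\mu$ are $w^{(j)}_{(n)}=y_1^jz_1^{n-j}$ ($1\le j\le n-1$) and, for $\mu_2>0$, $w^{(j)}_\mu=y_1^j(y_1z_2-y_2z_1)^{\mu_2}z_1^{\mu_1-\mu_2-j}$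 ($0\le j\le\mu_1-\mu_2$). *)

theory Defs
  imports Main "HOL-Library.Poly_Mapping"
begin

text \<open>Commutative polynomial ring K[Y,Z]: variables Inl i = y_i, Inr i = z_i.
  Polynomials are finitely supported maps from monomials (exponent vectors) to K.\<close>

type_synonym 'k pol = "((nat + nat) \<Rightarrow>\<^sub>0 nat) \<Rightarrow>\<^sub>0 'k"

definition Yv :: "nat \<Rightarrow> 'k::comm_ring_1 pol" where
  "Yv i = Poly_Mapping.single (Poly_Mapping.single (Inl i) 1) 1"

definition Zv :: "nat \<Rightarrow> 'k::comm_ring_1 pol" where
  "Zv i = Poly_Mapping.single (Poly_Mapping.single (Inr i) 1) 1"

definition constp :: "'k::comm_ring_1 \<Rightarrow> 'k pol" where
  "constp c = Poly_Mapping.single 0 c"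

definition pos_bideg :: "'k::comm_ring_1 pol \<Rightarrow> bool" where
  "pos_bideg p \<longleftrightarrow> (\<forall>m \<in> Poly_Mapping.keys p. (\<exists>i. 0 < Poly_Mapping.lookup m (Inl i)) \<and> (\<exists>i. 0 < Poly_Mapping.lookup m (Inr i)))"

text \<open>The algebra G: an element is \<Sum> l_i x_i + P with P \<in> K[Y,Z] of positive degree in
  both sets of variables; represented as the pair (l, P).\<close>
type_synonym 'k gel = "(nat \<Rightarrow>\<^sub>0 'k) \<times> 'k pol"

definition Gc :: "'k::comm_ring_1 gel set" where
  "Gc = {(l, p). pos_bideg p}"

definition Ylin :: "(nat \<Rightarrow>\<^sub>0 'k) \<Rightarrow> 'k::comm_ring_1 pol" where
  "Ylin l = (\<Sum>i\<in>Poly_Mapping.keys l. constp (Poly_Mapping.lookup l i) * Yv i)"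

definition Zlin :: "(nat \<Rightarrow>\<^sub>0 'k) \<Rightarrow> 'k::comm_ring_1 pol" where
  "Zlin l = (\<Sum>i\<in>Poly_Mapping.keys l. constp (Poly_Mapping.lookup l i) * Zv i)"

definition gzero :: "'k::comm_ring_1 gel" where
  "gzero = (0, 0)"

definition gadd :: "'k::comm_ring_1 gel \<Rightarrow> 'k gel \<Rightarrow> 'k gel" where
  "gadd a b = (fst a + fst b, snd a + snd b)"

definition gsmul :: "'k::comm_ring_1 \<Rightarrow> 'k gel \<Rightarrow> 'k gel" where
  "gsmul c a = (Poly_Mapping.map (\<lambda>v. c * v) (fst a), constp c * snd a)"

text \<open>Multiplication: x_i x_j = y_i z_j, x_i P = y_i P, P x_j = P z_j, P Q = PQ, bilinearly.\<close>
definition gmul :: "'k::comm_ring_1 gel \<Rightarrow> 'k gel \<Rightarrow> 'k gel" where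
  "gmul a b = (0, Ylin (fst a) * Zlin (fst b) + Ylin (fst a) * snd b
                  + snd a * Zlin (fst b) + snd a * snd b)"

definition emb :: "'k::comm_ring_1 pol \<Rightarrow> 'k gel" where
  "emb p = (0, p)"

definition is_endo :: "('k::comm_ring_1 gel \<Rightarrow> 'k gel) \<Rightarrow> bool" where
  "is_endo \<phi> \<longleftrightarrow> (\<forall>a\<in>Gc. \<phi> a \<in> Gc)
     \<and> (\<forall>a\<in>Gc. \<forall>b\<in>Gc. \<phi> (gadd a b) = gadd (\<phi> a) (\<phi> b))
     \<and> (\<forall>c. \<forall>a\<in>Gc. \<phi> (gsmul c a) = gsmul c (\<phi> a))
     \<and> (\<forall>a\<in>Gc. \<forall>b\<in>Gc. \<phi> (gmul a b) = gmul (\<phi> a) (\<phi> b))"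

definition is_Tideal :: "'k::comm_ring_1 gel set \<Rightarrow> bool" where
  "is_Tideal I \<longleftrightarrow> I \<subseteq> Gc \<and> gzero \<in> I
     \<and> (\<forall>a\<in>I. \<forall>b\<in>I. gadd a b \<in> I)
     \<and> (\<forall>c. \<forall>a\<in>I. gsmul c a \<in> I)
     \<and> (\<forall>a\<in>I. \<forall>g\<in>Gc. gmul g a \<in> I \<and> gmul a g \<in> I)
     \<and> (\<forall>\<phi>. is_endo \<phi> \<longrightarrow> (\<forall>a\<in>I. \<phi> a \<in> I))"

definition Tideal_gen :: "'k::comm_ring_1 gel set \<Rightarrow> 'k gel set" where
  "Tideal_gen S = \<Inter>{I. is_Tideal I \<and> S \<subseteq> I}"

definition wmu :: "nat \<Rightarrow> nat \<Rightarrow> nat \<Rightarrow> 'k::comm_ring_1 pol" where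
  "wmu \<mu>1 \<mu>2 j = (if \<mu>2 = 0 then Yv 1 ^ j * Zv 1 ^ (\<mu>1 - j)
      else Yv 1 ^ j * (Yv 1 * Zv 2 - Yv 2 * Zv 1) ^ \<mu>2 * Zv 1 ^ (\<mu>1 - \<mu>2 - j))"

definition admissible :: "nat \<Rightarrow> nat \<Rightarrow> nat \<Rightarrow> bool" where
  "admissible \<mu>1 \<mu>2 j \<longleftrightarrow>
     (\<mu>2 = 0 \<and> 1 \<le> j \<and> j + 1 \<le> \<mu>1) \<or> (0 < \<mu>2 \<and> \<mu>2 \<le> \<mu>1 \<and> j \<le> \<mu>1 - \<mu>2)"

end

theory Submission
  imports Defs
begin

definition fm :: "((nat+nat) \<Rightarrow>\<^sub>0 nat) \<Rightarrow> ((nat+nat) \<Rightarrow>\<^sub>0 nat)" where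
 "fm m = m - Poly_Mapping.single (Inl 2) (Poly_Mapping.lookup m (Inl 2))
           - Poly_Mapping.single (Inr 2) (Poly_Mapping.lookup m (Inr 2))
           + Poly_Mapping.single (Inl 1) (Poly_Mapping.lookup m (Inl 2) + Poly_Mapping.lookup m (Inr 2))
           + Poly_Mapping.single (Inr 1) (Poly_Mapping.lookup m (Inl 2) + Poly_Mapping.lookup m (Inr 2))"

lemma lookup_fm: "Poly_Mapping.lookup (fm m) v =
  (if v = Inl 2 \<or> v = Inr 2 then 0
   else if v = Inl 1 \<or> v = Inr 1 then Poly_Mapping.lookup m v + Poly_Mapping.lookup m (Inl 2) + Poly_Mapping.lookup m (Inr 2)
   else Poly_Mapping.lookup m v)"
  by (auto simp: fm_def lookup_add lookup_minus lookup_single when_def)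

lemma fm_add: "fm (a + b) = fm a + fm b"
  by (rule poly_mapping_eqI) (simp add: lookup_fm lookup_add)

lemma fm_zero: "fm 0 = 0"
  by (rule poly_mapping_eqI) (simp add: lookup_fm)

definition sb :: "'k::comm_ring_1 pol \<Rightarrow> 'k pol" where
  "sb p = (\<Sum>m\<in>Poly_Mapping.keys p. Poly_Mapping.single (fm m) (Poly_Mapping.lookup p m))"

lemma sb_eq: "finite S \<Longrightarrow> Poly_Mapping.keys p \<subseteq> S \<Longrightarrow>
   sb p = (\<Sum>m\<in>S. Poly_Mapping.single (fm m) (Poly_Mapping.lookup p m))"
  unfolding sb_def
  by (rule sum.mono_neutral_left) (auto simp: in_keys_iff)

lemma sb_add: "sb (p + q) = sb p + sb q"
proof -
  let ?S = "Poly_Mapping.keys p \<union> Poly_Mapping.keys q"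
  have "sb (p+q) = (\<Sum>m\<in>?S. Poly_Mapping.single (fm m) (Poly_Mapping.lookup (p+q) m))"
    by (rule sb_eq) (auto dest: set_mp[OF keys_add])
  also have "\<dots> = (\<Sum>m\<in>?S. Poly_Mapping.single (fm m) (Poly_Mapping.lookup p m))
     + (\<Sum>m\<in>?S. Poly_Mapping.single (fm m) (Poly_Mapping.lookup q m))"
    by (simp add: lookup_add single_add sum.distrib)
  also have "\<dots> = sb p + sb q" by (simp add: sb_eq[symmetric])
  finally show ?thesis .
qed

lemma sb_zero: "sb 0 = 0" by (simp add: sb_def)

lemma sb_single: "sb (Poly_Mapping.single m c) = Poly_Mapping.single (fm m) c"
  by (subst sb_eq[of "{m}"]) auto

lemma sb_sum: "finite A \<Longrightarrow> sb (sum g A) = (\<Sum>x\<in>A. sb (g x))"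
  by (induction A rule: finite_induct) (auto simp: sb_zero sb_add)

lemma pm_expand: "(p::'a \<Rightarrow>\<^sub>0 'b::comm_monoid_add) = (\<Sum>m\<in>Poly_Mapping.keys p. Poly_Mapping.single m (Poly_Mapping.lookup p m))"
  by (rule poly_mapping_eqI) (simp add: lookup_sum lookup_single when_def in_keys_iff)

lemma sb_mult: "sb (p * q) = sb p * sb q"
proof -
  let ?P = "Poly_Mapping.keys p" and ?Q = "Poly_Mapping.keys q"
  have "p * q = (\<Sum>a\<in>?P. Poly_Mapping.single a (Poly_Mapping.lookup p a)) * (\<Sum>b\<in>?Q. Poly_Mapping.single b (Poly_Mapping.lookup q b))"
    by (subst pm_expand[of p], subst pm_expand[of q]) (rule refl)
  also have "\<dots> = (\<Sum>a\<in>?P. \<Sum>b\<in>?Q. Poly_Mapping.single (a+b) (Poly_Mapping.lookup p a * Poly_Mapping.lookup q b))"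
    by (simp add: sum_product mult_single)
  finally have "sb (p*q) = (\<Sum>a\<in>?P. \<Sum>b\<in>?Q. Poly_Mapping.single (fm a + fm b) (Poly_Mapping.lookup p a * Poly_Mapping.lookup q b))"
    by (simp add: sb_sum sb_single fm_add)
  also have "\<dots> = sb p * sb q"
    by (simp add: sb_def sum_product mult_single)
  finally show ?thesis .
qed

lemma sb_uminus: "sb (- p) = - sb p"
  using sb_add[of p "-p"] by (simp add: sb_zero eq_neg_iff_add_eq_0 add.commute)

lemma sb_diff: "sb (p - q) = sb p - sb q"
  using sb_add[of p "-q"] by (simp add: sb_uminus)

lemma sb_one: "sb 1 = 1"
  using sb_single[of 0 1] by (simp add: fm_zero)

lemma sb_power: "sb (p ^ n) = sb p ^ n"
  by (induction n) (simp_all add: sb_one sb_mult)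

lemma sb_constp: "sb (constp c) = constp c"
  by (simp add: constp_def sb_single fm_zero)

lemma P_eq: "(Yv 1 * Zv 1 :: 'k::comm_ring_1 pol) = Poly_Mapping.single (Poly_Mapping.single (Inl 1) 1 + Poly_Mapping.single (Inr 1) 1) 1"
  by (simp add: Yv_def Zv_def mult_single)

lemma fm_Y: "fm (Poly_Mapping.single (Inl i) 1) = (if i = 2 then Poly_Mapping.single (Inl 1) 1 + Poly_Mapping.single (Inr 1) 1 else Poly_Mapping.single (Inl i) 1)"
  by (rule poly_mapping_eqI) (auto simp: lookup_fm lookup_add lookup_single when_def)

lemma fm_Z: "fm (Poly_Mapping.single (Inr i) 1) = (if i = 2 then Poly_Mapping.single (Inl 1) 1 + Poly_Mapping.single (Inr 1) 1 else Poly_Mapping.single (Inr i) 1)"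
  by (rule poly_mapping_eqI) (auto simp: lookup_fm lookup_add lookup_single when_def)

lemma sb_Yv: "sb (Yv i :: 'k::comm_ring_1 pol) = (if i = 2 then Yv 1 * Zv 1 else Yv i)"
  unfolding P_eq by (simp add: Yv_def sb_single fm_Y[simplified])

lemma sb_Zv: "sb (Zv i :: 'k::comm_ring_1 pol) = (if i = 2 then Yv 1 * Zv 1 else Zv i)"
  unfolding P_eq by (simp add: Zv_def sb_single fm_Z[simplified])


definition rm2 :: "(nat \<Rightarrow>\<^sub>0 'k::comm_ring_1) \<Rightarrow> (nat \<Rightarrow>\<^sub>0 'k)" where
  "rm2 l = l - Poly_Mapping.single 2 (Poly_Mapping.lookup l 2)"

lemma lookup_rm2: "Poly_Mapping.lookup (rm2 l) i = (if i = 2 then 0 else Poly_Mapping.lookup l i)"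
  by (simp add: rm2_def lookup_minus lookup_single when_def)

lemma keys_rm2: "Poly_Mapping.keys (rm2 l) \<subseteq> Poly_Mapping.keys l"
  by (auto simp: in_keys_iff lookup_rm2 split: if_splits)

lemma Ylin_eq: "finite S \<Longrightarrow> Poly_Mapping.keys l \<subseteq> S \<Longrightarrow>
   Ylin l = (\<Sum>i\<in>S. constp (Poly_Mapping.lookup l i) * Yv i)"
  unfolding Ylin_def by (rule sum.mono_neutral_left) (auto simp: in_keys_iff constp_def)

lemma Zlin_eq: "finite S \<Longrightarrow> Poly_Mapping.keys l \<subseteq> S \<Longrightarrow>
   Zlin l = (\<Sum>i\<in>S. constp (Poly_Mapping.lookup l i) * Zv i)"
  unfolding Zlin_def by (rule sum.mono_neutral_left) (auto simp: in_keys_iff constp_def)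

lemma constp_zero: "constp 0 = 0" by (simp add: constp_def)

lemma sb_Ylin: "sb (Ylin l) = Ylin (rm2 l) + constp (Poly_Mapping.lookup l 2) * (Yv 1 * Zv 1)"
proof -
  define S where "S = insert 2 (Poly_Mapping.keys l)"
  have fS: "finite S" and kS: "Poly_Mapping.keys l \<subseteq> S" "Poly_Mapping.keys (rm2 l) \<subseteq> S" "2 \<in> S"
    using keys_rm2 by (auto simp: S_def)
  have "sb (Ylin l) = (\<Sum>i\<in>S. constp (Poly_Mapping.lookup l i) * sb (Yv i))"
    by (simp add: Ylin_eq[OF fS kS(1)] sb_sum[OF fS] sb_mult sb_constp)
  also have "\<dots> = constp (Poly_Mapping.lookup l 2) * (Yv 1 * Zv 1) + (\<Sum>i\<in>S-{2}. constp (Poly_Mapping.lookup l i) * Yv i)"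
    by (simp add: sum.remove[OF fS kS(3)] sb_Yv)
  also have "Ylin (rm2 l) = (\<Sum>i\<in>S-{2}. constp (Poly_Mapping.lookup l i) * Yv i)"
    by (simp add: Ylin_eq[OF fS kS(2)] sum.remove[OF fS kS(3)] lookup_rm2 constp_zero)
  ultimately show ?thesis by (simp add: add.commute)
qed

lemma sb_Zlin: "sb (Zlin l) = Zlin (rm2 l) + constp (Poly_Mapping.lookup l 2) * (Yv 1 * Zv 1)"
proof -
  define S where "S = insert 2 (Poly_Mapping.keys l)"
  have fS: "finite S" and kS: "Poly_Mapping.keys l \<subseteq> S" "Poly_Mapping.keys (rm2 l) \<subseteq> S" "2 \<in> S"
    using keys_rm2 by (auto simp: S_def)
  have "sb (Zlin l) = (\<Sum>i\<in>S. constp (Poly_Mapping.lookup l i) * sb (Zv i))"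
    by (simp add: Zlin_eq[OF fS kS(1)] sb_sum[OF fS] sb_mult sb_constp)
  also have "\<dots> = constp (Poly_Mapping.lookup l 2) * (Yv 1 * Zv 1) + (\<Sum>i\<in>S-{2}. constp (Poly_Mapping.lookup l i) * Zv i)"
    by (simp add: sum.remove[OF fS kS(3)] sb_Zv)
  also have "Zlin (rm2 l) = (\<Sum>i\<in>S-{2}. constp (Poly_Mapping.lookup l i) * Zv i)"
    by (simp add: Zlin_eq[OF fS kS(2)] sum.remove[OF fS kS(3)] lookup_rm2 constp_zero)
  ultimately show ?thesis by (simp add: add.commute)
qed

lemma pos_bideg_mult: "pos_bideg p \<Longrightarrow> pos_bideg (p * q)"
  unfolding pos_bideg_def
proof
  fix m assume H: "\<forall>m\<in>Poly_Mapping.keys p. (\<exists>i. 0 < Poly_Mapping.lookup m (Inl i)) \<and> (\<exists>i. 0 < Poly_Mapping.lookup m (Inr i))"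
    and m: "m \<in> Poly_Mapping.keys (p * q)"
  then obtain a b where ab: "m = a + b" "a \<in> Poly_Mapping.keys p" using keys_mult by blast
  from H ab(2) obtain i j where "0 < Poly_Mapping.lookup a (Inl i)" "0 < Poly_Mapping.lookup a (Inr j)" by blast
  then have "0 < Poly_Mapping.lookup m (Inl i)" "0 < Poly_Mapping.lookup m (Inr j)"
    unfolding ab(1) lookup_add by simp_all
  then show "(\<exists>i. 0 < Poly_Mapping.lookup m (Inl i)) \<and> (\<exists>i. 0 < Poly_Mapping.lookup m (Inr i))"
    by blast
qed

lemma pos_bideg_mult2: "pos_bideg q \<Longrightarrow> pos_bideg (p * q)"
  using pos_bideg_mult[of q p] by (simp add: mult.commute)

lemma pos_bideg_add: "pos_bideg p \<Longrightarrow> pos_bideg q \<Longrightarrow> pos_bideg (p + q)"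
  unfolding pos_bideg_def using keys_add[of p q] by (meson UnE subsetD)

lemma pos_bideg_diff: "pos_bideg p \<Longrightarrow> pos_bideg q \<Longrightarrow> pos_bideg (p - q)"
  unfolding pos_bideg_def using keys_diff[of p q] by (meson UnE subsetD)

lemma pos_bideg_YZ: "pos_bideg (Yv i * Zv j :: 'k::comm_ring_1 pol)"
proof -
  have "Yv i * Zv j = (Poly_Mapping.single (Poly_Mapping.single (Inl i) 1 + Poly_Mapping.single (Inr j) 1) 1 :: 'k pol)"
    by (simp add: Yv_def Zv_def mult_single)
  moreover have "Poly_Mapping.lookup (Poly_Mapping.single (Inl i) 1 + Poly_Mapping.single (Inr j) (1::nat)) (Inl i) > 0"
    "Poly_Mapping.lookup (Poly_Mapping.single (Inl i) 1 + Poly_Mapping.single (Inr j) (1::nat)) (Inr j) > 0"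
    by (simp_all add: lookup_add lookup_single)
  ultimately show ?thesis unfolding pos_bideg_def by auto
qed

lemma keys_sb: "Poly_Mapping.keys (sb p) \<subseteq> fm ` Poly_Mapping.keys p"
proof -
  have "Poly_Mapping.keys (sb p) \<subseteq> (\<Union>m\<in>Poly_Mapping.keys p. Poly_Mapping.keys (Poly_Mapping.single (fm m) (Poly_Mapping.lookup p m)))"
    unfolding sb_def by (rule keys_sum)
  also have "\<dots> \<subseteq> fm ` Poly_Mapping.keys p" by auto
  finally show ?thesis .
qed

lemma pos_bideg_fm:
  assumes "(\<exists>i. 0 < Poly_Mapping.lookup m (Inl i)) \<and> (\<exists>i. 0 < Poly_Mapping.lookup m (Inr i))"
  shows "(\<exists>i. 0 < Poly_Mapping.lookup (fm m) (Inl i)) \<and> (\<exists>i. 0 < Poly_Mapping.lookup (fm m) (Inr i))"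
proof -
  from assms obtain i j where i: "0 < Poly_Mapping.lookup m (Inl i)" and j: "0 < Poly_Mapping.lookup m (Inr j)" by blast
  have "\<exists>i. 0 < Poly_Mapping.lookup (fm m) (Inl i)"
  proof (cases "i = 1 \<or> i = 2")
    case True then show ?thesis using i by (intro exI[of _ 1]) (auto simp: lookup_fm)
  next
    case False then show ?thesis using i by (intro exI[of _ i]) (auto simp: lookup_fm)
  qed
  moreover have "\<exists>i. 0 < Poly_Mapping.lookup (fm m) (Inr i)"
  proof (cases "j = 1 \<or> j = 2")
    case True then show ?thesis using j by (intro exI[of _ 1]) (auto simp: lookup_fm)
  next
    case False then show ?thesis using j by (intro exI[of _ j]) (auto simp: lookup_fm)
  qed
  ultimately show ?thesis by blast
qed

lemma pos_bideg_sb: "pos_bideg p \<Longrightarrow> pos_bideg (sb p)"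
  unfolding pos_bideg_def using keys_sb[of p] pos_bideg_fm by (smt (verit) image_iff subsetD)

lemma pos_bideg_P: "pos_bideg (constp c * (Yv 1 * Zv 1) :: 'k::comm_ring_1 pol)"
  by (rule pos_bideg_mult2, rule pos_bideg_YZ)

definition phi :: "'k::comm_ring_1 gel \<Rightarrow> 'k gel" where
  "phi a = (rm2 (fst a), constp (Poly_Mapping.lookup (fst a) 2) * (Yv 1 * Zv 1) + sb (snd a))"

lemma constp_add: "constp (a + b) = constp a + constp b" by (simp add: constp_def single_add)
lemma constp_mult: "constp (a * b) = constp a * constp b" by (simp add: constp_def mult_single)

lemma rm2_add: "rm2 (a + b) = rm2 a + rm2 b"
  by (rule poly_mapping_eqI) (simp add: lookup_rm2 lookup_add)

lemma lookup_map_mult: "Poly_Mapping.lookup (Poly_Mapping.map (\<lambda>v. (c::'k::comm_ring_1) * v) l) i = c * Poly_Mapping.lookup l i"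
  by (simp add: map.rep_eq when_def)

lemma rm2_map: "rm2 (Poly_Mapping.map (\<lambda>v. c * v) l) = Poly_Mapping.map (\<lambda>v. c * v) (rm2 l)"
  by (rule poly_mapping_eqI) (simp add: lookup_rm2 lookup_map_mult)

lemma Ylin_zero: "Ylin 0 = 0" by (simp add: Ylin_def)
lemma Zlin_zero: "Zlin 0 = 0" by (simp add: Zlin_def)

lemma phi_endo: "is_endo (phi :: 'k::comm_ring_1 gel \<Rightarrow> 'k gel)"
  unfolding is_endo_def
proof (intro conjI ballI allI)
  fix a :: "'k gel" assume "a \<in> Gc"
  then show "phi a \<in> Gc"
    by (auto simp: Gc_def phi_def intro!: pos_bideg_add pos_bideg_sb pos_bideg_mult2 pos_bideg_YZ)
next
  fix a b :: "'k gel"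
  show "phi (gadd a b) = gadd (phi a) (phi b)"
    by (simp add: phi_def gadd_def rm2_add lookup_add constp_add sb_add algebra_simps)
next
  fix c and a :: "'k gel"
  show "phi (gsmul c a) = gsmul c (phi a)"
  proof -
    have "snd (phi (gsmul c a)) = snd (gsmul c (phi a))"
      unfolding phi_def gsmul_def fst_conv snd_conv lookup_map_mult
      by (simp add: constp_mult sb_mult sb_constp sb_add algebra_simps del: One_nat_def)
    moreover have "fst (phi (gsmul c a)) = fst (gsmul c (phi a))"
      by (simp add: phi_def gsmul_def rm2_map)
    ultimately show ?thesis by (simp add: prod_eq_iff)
  qed
next
  fix a b :: "'k gel"
  have z: "rm2 (0::nat \<Rightarrow>\<^sub>0 'k) = 0" by (rule poly_mapping_eqI) (simp add: lookup_rm2)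
  show "phi (gmul a b) = gmul (phi a) (phi b)"
    by (simp add: phi_def gmul_def z constp_zero sb_add sb_mult sb_Ylin sb_Zlin algebra_simps)
qed


lemma phi_emb: "phi (emb p) = emb (sb p)"
proof -
  have z: "rm2 (0::nat \<Rightarrow>\<^sub>0 'a::comm_ring_1) = 0" by (rule poly_mapping_eqI) (simp add: lookup_rm2)
  show ?thesis by (simp add: phi_def emb_def z constp_zero)
qed

lemma gmul_emb: "gmul (emb p) (emb q) = emb (p * q)"
  by (simp add: gmul_def emb_def Ylin_zero Zlin_zero)

lemma sb_gen: "sb ((Yv 1 * Zv 2 - Yv 2 * Zv 1) ^ k :: 'k::comm_ring_1 pol) = (Yv 1 * Zv 1) ^ k * (Yv 1 - Zv 1) ^ k"
proof -
  have "sb (Yv 1 * Zv 2 - Yv 2 * Zv 1 :: 'k pol) = (Yv 1 * Zv 1) * (Yv 1 - Zv 1)"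
    by (simp add: sb_diff sb_mult sb_Yv sb_Zv algebra_simps)
  then show ?thesis by (simp add: sb_power power_mult_distrib)
qed

lemma pos_bideg_gen: "pos_bideg (Yv 1 * Zv 2 - Yv 2 * Zv 1 :: 'k::comm_ring_1 pol)"
  by (intro pos_bideg_diff pos_bideg_YZ)

lemma pos_bideg_gen_pow: "0 < n \<Longrightarrow> pos_bideg ((Yv 1 * Zv 2 - Yv 2 * Zv 1 :: 'k::comm_ring_1 pol) ^ n)"
  by (cases n) (simp_all add: pos_bideg_mult pos_bideg_gen del: One_nat_def)

lemma pos_bideg_wmu: "admissible m1 m2 j \<Longrightarrow> pos_bideg (wmu m1 m2 j :: 'k::comm_ring_1 pol)"
proof -
  assume a: "admissible m1 m2 j"
  show ?thesis
  proof (cases "m2 = 0")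
    case True
    with a have j: "1 \<le> j" "j + 1 \<le> m1" by (auto simp: admissible_def)
    have "wmu m1 m2 j = (Yv 1 * Zv 1) * (Yv 1 ^ (j - 1) * Zv 1 ^ (m1 - j - 1) :: 'k pol)"
    proof -
      have "Yv 1 ^ j = Yv 1 * (Yv 1 ^ (j - 1) :: 'k pol)" using j by (metis Suc_diff_le diff_Suc_1 power_Suc)
      moreover have "Zv 1 ^ (m1 - j) = Zv 1 * (Zv 1 ^ (m1 - j - 1) :: 'k pol)" using j
        by (metis Suc_diff_Suc Suc_eq_plus1 diff_Suc_1 diff_diff_left less_eq_Suc_le power_Suc)
      ultimately show ?thesis using True by (simp add: wmu_def algebra_simps)
    qed
    then show ?thesis by (simp add: pos_bideg_mult pos_bideg_YZ)
  next
    case False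
    then have "wmu m1 m2 j = (Yv 1 * Zv 2 - Yv 2 * Zv 1) ^ m2 * (Yv 1 ^ j * Zv 1 ^ (m1 - m2 - j) :: 'k pol)"
      by (simp add: wmu_def algebra_simps)
    then show ?thesis using False by (simp add: pos_bideg_mult pos_bideg_gen_pow del: One_nat_def)
  qed
qed

theorem lemma4p4:
  fixes k :: nat
  assumes "1 \<le> k"
  shows "emb ((Yv 1 * Zv 1) ^ k * (Yv 1 - Zv 1) ^ k)
           \<in> Tideal_gen {emb ((Yv 1 * Zv 2 - Yv 2 * Zv 1) ^ k) :: 'k::field_char_0 gel}
         \<and> (\<forall>\<mu>1 \<mu>2 j. admissible \<mu>1 \<mu>2 j \<longrightarrow>
           emb ((Yv 1 * Zv 1) ^ k * (Yv 1 - Zv 1) ^ k * wmu \<mu>1 \<mu>2 j)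
             \<in> Tideal_gen {emb ((Yv 1 * Zv 2 - Yv 2 * Zv 1) ^ k) :: 'k::field_char_0 gel})"
proof -
  let ?g = "emb ((Yv 1 * Zv 2 - Yv 2 * Zv 1) ^ k) :: 'k gel"
  let ?t = "(Yv 1 * Zv 1) ^ k * (Yv 1 - Zv 1) ^ k :: 'k pol"
  have main: "emb ?t \<in> I" if I: "is_Tideal I" "?g \<in> I" for I
  proof -
    have "phi ?g \<in> I" using I phi_endo unfolding is_Tideal_def by blast
    then show ?thesis by (simp add: phi_emb sb_gen del: One_nat_def)
  qed
  have second: "emb (?t * wmu m1 m2 j) \<in> I" if I: "is_Tideal I" "?g \<in> I" and a: "admissible m1 m2 j" for I m1 m2 j
  proof -
    have "emb (wmu m1 m2 j) \<in> (Gc :: 'k gel set)" using pos_bideg_wmu[OF a] by (simp add: Gc_def emb_def)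
    moreover have "emb ?t \<in> I" using main I by blast
    ultimately have "gmul (emb ?t) (emb (wmu m1 m2 j)) \<in> I" using I(1) unfolding is_Tideal_def by blast
    then show ?thesis by (simp add: gmul_emb)
  qed
  show ?thesis
    unfolding Tideal_gen_def using main second by blast
qed

end
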